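(* Let $\epsilon>0$ be sufficiently small. For $\chi\in[0,\pi]$, $\psi\in[-\pi/2,\pi/2]$ set $A_0=e^{i\chi\sigma_z}$, $a_0=i\sigma_x\cos\psi+i\sigma_z\sin\psi$, $c=A_0a_0A_0^{-1}$, and let $$Q(\chi,\psi)=\big[(\,a_0,\ a_0^{-1}c\,a_0A_0,\ a_0^{-1}c\,a_0,\ c\,a_0^{-1}c^{-1}\,)\big]\in R(T^2,2).$$ If $Q(\chi,\psi)=L_s(\phi,\theta)$ for some spherical-polar coordinates $(\phi,\theta)$, then $\chi=\pi/2$, and either $\theta\in\{\pi/2,3\pi/2\}$ or $\phi\in\{0,\pi\}$.
   Context: Pauli matrices standard; $[A,B]=ABA^{-1}B^{-1}$. $R(T^2,2)$ is the space of tuples $(A,B,a,b)\in SU(2)^4$ with $\operatorname{tr}a=\operatorname{tr}b=0$ and $[A,B]ab=1$ modulo simultaneous conjugation (the tuple defining $Q$ satisfies these conditions). For $\nu=\epsilon\sin\phi$, $L_s(\phi,\theta)=[(A,B,a,b)]$ with $a=i\sigma_z$, $h=(\cos^2\nu+\sin^2\nu\sin^2\theta)^{-1/2}(i\sigma_x\cos\nu-i\sigma_z\sin\nu\sin\theta)$, $A=h(\cos\phi+i\sin\phi(\sigma_x\cos\theta+\sigma_y\sin\theta))$, $B=\cos\nu+i\sin\nu(\sigma_x\cos\theta+\sigma_y\sin\theta)$, $b=-ha^{-1}h^{-1}$. ($Q(\chi,\psi)$ is the image of the disk Lagrangian point $[(e^{i\chi\sigma_z},1,a_0,a_0^{-1})]$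 under the mapping class $s\beta_1\alpha_1^{-1}$ of the twice-punctured torus that produces the trefoil in $S^3$.) *)

theory Defs
  imports "HOL-Analysis.Analysis"
begin

type_synonym cmat = "complex^2^2"

definition sigma_x :: cmat where
  "sigma_x = (\<chi> i j. if i = j then 0 else 1)"
definition sigma_y :: cmat where
  "sigma_y = (\<chi> i j. if i = j then 0 else if i = 1 then - \<i> else \<i>)"
definition sigma_z :: cmat where
  "sigma_z = (\<chi> i j. if i \<noteq> j then 0 else if i = 1 then 1 else -1)"

definition csm :: "complex \<Rightarrow> cmat \<Rightarrow> cmat" where
  "csm c M = (\<chi> i j. c * M $ i $ j)"

definition adjoint_mat :: "cmat \<Rightarrow> cmat" where
  "adjoint_mat M = (\<chi> i j. cnj (M $ j $ i))"

definition SU2 :: "cmat set" where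
  "SU2 = {M. M ** adjoint_mat M = mat 1 \<and> det M = 1}"

definition minv :: "cmat \<Rightarrow> cmat" where
  "minv M = matrix_inv M"

definition comm :: "cmat \<Rightarrow> cmat \<Rightarrow> cmat" where
  "comm A B = A ** B ** minv A ** minv B"

type_synonym tup = "cmat \<times> cmat \<times> cmat \<times> cmat"

text \<open>Tuples (A,B,a,b) representing points of R(T^2,2) (before quotienting).\<close>
definition R_T2_2 :: "tup set" where
  "R_T2_2 = {(A,B,a,b). A \<in> SU2 \<and> B \<in> SU2 \<and> a \<in> SU2 \<and> b \<in> SU2 \<and>
                 trace a = 0 \<and> trace b = 0 \<and> comm A B ** a ** b = mat 1}"

definition conj_by :: "cmat \<Rightarrow> cmat \<Rightarrow> cmat" where
  "conj_by g M = g ** M ** minv g"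

text \<open>Equality of the classes [T1] = [T2] in R(T^2,2): simultaneous conjugation.\<close>
definition same_class :: "tup \<Rightarrow> tup \<Rightarrow> bool" where
  "same_class T1 T2 \<longleftrightarrow>
     (\<exists>g\<in>SU2. case T1 of (A,B,a,b) \<Rightarrow>
        T2 = (conj_by g A, conj_by g B, conj_by g a, conj_by g b))"

text \<open>e^{i chi sigma_z} = diag(e^{i chi}, e^{-i chi})\<close>
definition exp_i_sz :: "real \<Rightarrow> cmat" where
  "exp_i_sz x = (\<chi> i j. if i \<noteq> j then 0 else if i = 1 then cis x else cis (- x))"

definition Q :: "real \<Rightarrow> real \<Rightarrow> tup" where
  "Q chi psi = (let A0 = exp_i_sz chi;
                    a0 = csm (\<i> * cos psi) sigma_x + csm (\<i> * sin psi) sigma_z;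
                    c = A0 ** a0 ** minv A0
                in (a0, minv a0 ** c ** a0 ** A0, minv a0 ** c ** a0, c ** minv a0 ** minv c))"

definition Ls :: "real \<Rightarrow> real \<Rightarrow> real \<Rightarrow> tup" where
  "Ls eps phi theta = (let nu = eps * sin phi;
       a = csm \<i> sigma_z;
       h = (1 / sqrt ((cos nu)\<^sup>2 + (sin nu)\<^sup>2 * (sin theta)\<^sup>2)) *\<^sub>R
             (csm (\<i> * cos nu) sigma_x - csm (\<i> * sin nu * sin theta) sigma_z);
       n = csm (cos theta) sigma_x + csm (sin theta) sigma_y;
       A = h ** (csm (cos phi) (mat 1) + csm (\<i> * sin phi) n);
       B = csm (cos nu) (mat 1) + csm (\<i> * sin nu) n;
       b = - (h ** minv a ** minv h)
     in (A, B, a, b))"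

end

theory Submission imports Defs begin

lemma minv_eq: fixes A B :: cmat assumes "A ** B = mat 1"
  shows "minv A = B" "B ** A = mat 1"
proof -
  have BA: "B ** A = mat 1" using assms matrix_left_right_inverse by blast
  show "B ** A = mat 1" by (fact BA)
  have u: "\<And>C. A ** C = mat 1 \<and> C ** A = mat 1 \<Longrightarrow> C = B"
    by (metis BA assms matrix_mul_assoc matrix_mul_rid)
  have ex: "\<exists>C. A ** C = mat 1 \<and> C ** A = mat 1" using assms BA by blast
  have "A ** minv A = mat 1 \<and> minv A ** A = mat 1"
    unfolding minv_def matrix_inv_def by (rule someI_ex[OF ex])
  then show "minv A = B" by (rule u)
qed

lemma SU2_inv: assumes "g \<in> SU2" shows "minv g ** g = mat 1"
proof -
  have "g ** adjoint_mat g = mat 1" using assms by (simp add: SU2_def)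
  then have "minv g = adjoint_mat g" "adjoint_mat g ** g = mat 1" by (rule minv_eq)+
  then show ?thesis by simp
qed

lemma trace_conj: assumes "g \<in> SU2" shows "trace (conj_by g M) = trace M"
proof -
  have "trace (conj_by g M) = trace (minv g ** (g ** M))"
    unfolding conj_by_def by (metis trace_mul_sym)
  also have "\<dots> = trace M" using SU2_inv[OF assms]
    by (metis matrix_mul_assoc matrix_mul_lid)
  finally show ?thesis .
qed

lemma conj_mult: assumes "g \<in> SU2" shows "conj_by g M ** conj_by g N = conj_by g (M ** N)"
  using SU2_inv[OF assms] unfolding conj_by_def
  by (metis matrix_mul_assoc matrix_mul_rid)

lemma tA: fixes r nu theta phi :: real shows
 "trace (r *\<^sub>R (csm (\<i> * cos nu) sigma_x - csm (\<i> * sin nu * sin theta) sigma_z) ** (csm (cos phi) (mat 1) + csm (\<i> * sin phi) (csm (cos theta) sigma_x + csm (sin theta) sigma_y)))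
  = complex_of_real (- 2 * r * cos nu * sin phi * cos theta)"
  by (simp add: trace_def sum_2 csm_def sigma_z_def sigma_x_def sigma_y_def matrix_matrix_mult_def mat_def algebra_simps)
   (simp add: scaleR_conv_of_real algebra_simps)

lemma tBa: fixes nu theta :: real shows
 "trace ((csm (cos nu) (mat 1) + csm (\<i> * sin nu) (csm (cos theta) sigma_x + csm (sin theta) sigma_y)) ** csm \<i> sigma_z) = 0"
  by (simp add: trace_def sum_2 csm_def sigma_z_def sigma_x_def sigma_y_def matrix_matrix_mult_def mat_def algebra_simps)

lemma A0inv: "exp_i_sz x ** exp_i_sz (-x) = mat 1"
  by (simp add: vec_eq_iff forall_2 sum_2 exp_i_sz_def matrix_matrix_mult_def mat_def cis_mult)

lemma a0sq: fixes psi :: real shows "(csm (\<i> * cos psi) sigma_x + csm (\<i> * sin psi) sigma_z) ** (csm (\<i> * cos psi) sigma_x + csm (\<i> * sin psi) sigma_z) = - mat 1"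
proof -
  have e: "(complex_of_real (cos psi))^2 + (complex_of_real (sin psi))^2 = 1"
    by (metis of_real_add of_real_power of_real_1 sin_cos_squared_add2)
  show ?thesis
    apply (simp add: vec_eq_iff forall_2 sum_2 csm_def sigma_z_def sigma_x_def matrix_matrix_mult_def mat_def algebra_simps)
    using e by (simp add: power2_eq_square algebra_simps)
qed

lemma tr_exp: "trace (exp_i_sz x) = complex_of_real (2 * cos x)"
  by (simp add: trace_def sum_2 exp_i_sz_def cis.ctr complex_eq_iff)

lemma tr_a0: fixes psi :: real shows "trace (csm (\<i> * cos psi) sigma_x + csm (\<i> * sin psi) sigma_z) = 0"
  by (simp add: trace_def sum_2 csm_def sigma_z_def sigma_x_def)

lemma mneg: fixes A B :: cmat shows "A ** (- B) = - (A ** B)" "(- B) ** A = - (B ** A)"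
  by (simp_all add: vec_eq_iff matrix_matrix_mult_def sum_negf)

lemma tr_neg: fixes A :: cmat shows "trace (- A) = - trace A"
  by (simp add: trace_def sum_negf)

lemma cancel: fixes P Q Y :: cmat shows "P ** Q = mat 1 \<Longrightarrow> P ** (Q ** Y) = Y"
  by (metis matrix_mul_assoc matrix_mul_lid)

lemma trig1: "chi \<in> {0..pi} \<Longrightarrow> cos chi = 0 \<Longrightarrow> chi = pi/2"
  by (metis atLeastAtMost_iff cos_inj_pi cos_pi_half pi_half_ge_zero pi_half_le_two pi_ge_two order_trans field_sum_of_halves le_add_same_cancel1)

lemma trig2: assumes "phi \<in> {0..pi}" "sin phi = 0" shows "phi \<in> {0, pi}"
proof -
  obtain i :: int where i: "phi = i * pi" using assms(2) sin_zero_iff_int2 by blast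
  have "0 \<le> real_of_int i" "real_of_int i \<le> 1" using assms(1) i pi_gt_zero
    by (auto simp: zero_le_mult_iff mult_le_cancel_right2)
  then have "i = 0 \<or> i = 1" by linarith
  then show ?thesis using i by auto
qed

lemma trig3: assumes "theta \<in> {0..<2*pi}" "cos theta = 0" shows "theta \<in> {pi/2, 3*pi/2}"
proof -
  obtain n :: int where n: "theta = n * pi + pi/2" using assms(2) cos_zero_iff_int2 by blast
  have "0 \<le> (real_of_int n + 1/2) * pi" "(real_of_int n + 1/2) * pi < 2 * pi"
    using assms(1) n by (auto simp: algebra_simps)
  then have "0 \<le> real_of_int n + 1/2" "real_of_int n + 1/2 < 2" using pi_gt_zero
    by (auto simp: zero_le_mult_iff mult_less_cancel_right)
  then have "n = 0 \<or> n = 1" by linarith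
  then show ?thesis using n by auto
qed


theorem mainTheorem15:
  shows "\<exists>eps0 > 0. \<forall>eps. 0 < eps \<and> eps < eps0 \<longrightarrow>
     (\<forall>chi psi phi theta.
        chi \<in> {0..pi} \<and> psi \<in> {-pi/2..pi/2} \<and>
        phi \<in> {0..pi} \<and> theta \<in> {0..<2*pi} \<and>
        same_class (Q chi psi) (Ls eps phi theta) \<longrightarrow>
        chi = pi/2 \<and> (theta \<in> {pi/2, 3*pi/2} \<or> phi \<in> {0, pi}))"
proof (intro exI[of _ 1] conjI allI impI)
  show "(0::real) < 1" by simp
  fix eps chi psi phi theta :: real
  assume eps: "0 < eps \<and> eps < 1"
  assume H: "chi \<in> {0..pi} \<and> psi \<in> {-pi/2..pi/2} \<and>
        phi \<in> {0..pi} \<and> theta \<in> {0..<2*pi} \<and> same_class (Q chi psi) (Ls eps phi theta)"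
  define A0 where "A0 = exp_i_sz chi"
  define a0 :: cmat where "a0 = csm (\<i> * cos psi) sigma_x + csm (\<i> * sin psi) sigma_z"
  define c where "c = A0 ** a0 ** minv A0"
  define X where "X = minv a0 ** c ** a0"
  have QE: "Q chi psi = (a0, X ** A0, X, c ** minv a0 ** minv c)"
    unfolding Q_def Let_def A0_def a0_def c_def X_def by simp
  have A0r: "A0 ** minv A0 = mat 1" and A0l: "minv A0 ** A0 = mat 1"
    using minv_eq[OF A0inv[of chi]] A0inv[of chi] unfolding A0_def by auto
  have sq: "a0 ** a0 = - mat 1" unfolding a0_def by (rule a0sq)
  have "a0 ** (- a0) = mat 1" using sq by (simp add: mneg)
  then have a0r: "a0 ** minv a0 = mat 1" and a0l: "minv a0 ** a0 = mat 1"
    using minv_eq by auto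
  have sqY: "\<And>Y::cmat. a0 ** (a0 ** Y) = - Y"
  proof -
    fix Y :: cmat
    have "a0 ** (a0 ** Y) = (a0 ** a0) ** Y" by (simp only: matrix_mul_assoc)
    also have "\<dots> = - Y" by (simp add: sq mneg)
    finally show "a0 ** (a0 ** Y) = - Y" .
  qed
  have cc: "c ** c = - mat 1"
  proof -
    have "c ** c = A0 ** (a0 ** (minv A0 ** (A0 ** (a0 ** minv A0))))"
      unfolding c_def by (simp add: matrix_mul_assoc)
    also have "\<dots> = A0 ** (a0 ** (a0 ** minv A0))" using cancel[OF A0l] by simp
    also have "\<dots> = - mat 1" using sqY A0r by (simp add: mneg)
    finally show ?thesis .
  qed
  have ccY: "\<And>Y::cmat. c ** (c ** Y) = - Y"
  proof -
    fix Y :: cmat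
    have "c ** (c ** Y) = (c ** c) ** Y" by (simp only: matrix_mul_assoc)
    also have "\<dots> = - Y" by (simp add: cc mneg)
    finally show "c ** (c ** Y) = - Y" .
  qed
  have XX: "X ** X = - mat 1"
  proof -
    have "X ** X = minv a0 ** (c ** (a0 ** (minv a0 ** (c ** a0))))"
      unfolding X_def by (simp add: matrix_mul_assoc)
    also have "\<dots> = minv a0 ** (c ** (c ** a0))" using cancel[OF a0r] by simp
    also have "\<dots> = - mat 1" using ccY a0l by (simp add: mneg)
    finally show ?thesis .
  qed
  have trBa: "trace (X ** A0 ** X) = - complex_of_real (2 * cos chi)"
  proof -
    have "trace (X ** A0 ** X) = trace (X ** (X ** A0))" by (metis trace_mul_sym)
    also have "X ** (X ** A0) = (X ** X) ** A0" by (simp only: matrix_mul_assoc)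
    also have "(X ** X) ** A0 = - A0" by (simp add: XX mneg)
    finally show ?thesis unfolding A0_def by (simp add: tr_neg tr_exp)
  qed
  obtain g where g: "g \<in> SU2" and LE: "Ls eps phi theta =
      (conj_by g a0, conj_by g (X ** A0), conj_by g X, conj_by g (c ** minv a0 ** minv c))"
    using H unfolding same_class_def QE by auto
  define nu where "nu = eps * sin phi"
  define r where "r = 1 / sqrt ((cos nu)\<^sup>2 + (sin nu)\<^sup>2 * (sin theta)\<^sup>2)"
  have t1: "trace (fst (Ls eps phi theta)) = complex_of_real (- 2 * r * cos nu * sin phi * cos theta)"
    unfolding Ls_def Let_def fst_conv r_def nu_def by (rule tA)
  have t2: "trace (fst (snd (Ls eps phi theta)) ** fst (snd (snd (Ls eps phi theta)))) = 0"
    unfolding Ls_def Let_def fst_conv snd_conv by (rule tBa)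
  have "trace (fst (Ls eps phi theta)) = 0"
    using LE trace_conj[OF g] unfolding a0_def by (simp add: tr_a0)
  with t1 have z1: "r * cos nu * sin phi * cos theta = 0" by simp
  have "trace (fst (snd (Ls eps phi theta)) ** fst (snd (snd (Ls eps phi theta)))) = trace (X ** A0 ** X)"
    using LE by (simp add: conj_mult[OF g] trace_conj[OF g])
  with t2 trBa have "cos chi = 0" by simp
  then have chi: "chi = pi/2" using H trig1 by blast
  have "\<bar>nu\<bar> \<le> eps" unfolding nu_def using eps by (simp add: abs_mult mult_left_le)
  then have "\<bar>nu\<bar> < pi/2" using eps pi_gt3 by linarith
  then have cnu: "cos nu > 0" by (intro cos_gt_zero_pi) auto
  then have "r > 0" unfolding r_def by (simp add: add_pos_nonneg)
  with cnu z1 have "sin phi = 0 \<or> cos theta = 0" by simp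
  then show "theta \<in> {pi/2, 3*pi/2} \<or> phi \<in> {0, pi}"
    using H trig2 trig3 by blast
  show "chi = pi/2" by (rule chi)
qed

end
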